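(* Fix any $\alpha\ge1$ and any constant success probability $p\in(0,1]$. Suppose an algorithm uses only the ordinal profile (no distance queries) and, on every instance and every consistent profile, outputs with probability at least $p$ a set of centers whose $k$-center cost is at most $\alpha\cdot\mathrm{OPT}^{\mathrm{center}}_k$. Then there are instances on which its output has size $\Omega(2^k)$. Moreover, suppose an algorithm in the ordinal query model outputs at most $k$ centers and, on every instance, has $k$-center cost at most $\alpha\cdot \mathrm{OPT}^{\mathrm{center}}_k$ with probability at least $p$. Then it must make $\Omega(k)$ distance queries on some instance.
   Context: Ordinal query model: $(X,d)$ is a finite metric space with $|X|=n$. Every point $x\in X$ reports a ranking $\pi_x$ of all points of $X$ such that $y$ is ranked above $y'$ only if $d(x,y)\le d(x,y')$ (ties broken arbitrarily); the collection is a profile consistent with $d$. An algorithm receives $X$, $k$ and the profile for free. Its only other access to $d$ is by querying exact distances, at a cost of one query each. Algorithms may be randomized. For $C\subseteq X$, $d(x,C)=\min_{c\in C}d(x,c)$. The $k$-center cost of $C$ is $\max_{x\in X}d(x,C)$, and $\mathrm{OPT}^{\mathrm{center}}_k=\min_{C\subseteq X,|C|=k}\max_{x\in X}d(x,C)$. *)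

theory Defs
  imports "HOL-Probability.Probability_Mass_Function"
begin

definition metric_on :: "nat set \<Rightarrow> (nat \<Rightarrow> nat \<Rightarrow> real) \<Rightarrow> bool" where
  "metric_on X d \<longleftrightarrow>
     (\<forall>x\<in>X. \<forall>y\<in>X. d x y = d y x \<and> (d x y = 0 \<longleftrightarrow> x = y)
        \<and> (\<forall>z\<in>X. d x z \<le> d x y + d y z))
   \<and> (\<forall>a b. a \<notin> X \<or> b \<notin> X \<longrightarrow> d a b = 0)"

definition kc_instance :: "nat set \<Rightarrow> (nat \<Rightarrow> nat \<Rightarrow> real) \<Rightarrow> nat \<Rightarrow> bool" where
  "kc_instance X d k \<longleftrightarrow> finite X \<and> metric_on X d \<and> 1 \<le> k \<and> k \<le> card X"

definition consistent_profile ::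
  "nat set \<Rightarrow> (nat \<Rightarrow> nat \<Rightarrow> real) \<Rightarrow> (nat \<Rightarrow> nat list) \<Rightarrow> bool" where
  "consistent_profile X d \<pi> \<longleftrightarrow>
     (\<forall>x. (x \<in> X \<longrightarrow> distinct (\<pi> x) \<and> set (\<pi> x) = X \<and>
             (\<forall>i j. i < j \<longrightarrow> j < length (\<pi> x) \<longrightarrow> d x (\<pi> x ! i) \<le> d x (\<pi> x ! j)))
        \<and> (x \<notin> X \<longrightarrow> \<pi> x = []))"

definition dist_set :: "(nat \<Rightarrow> nat \<Rightarrow> real) \<Rightarrow> nat \<Rightarrow> nat set \<Rightarrow> real" where
  "dist_set d x C = Min (d x ` C)"

definition center_cost :: "nat set \<Rightarrow> (nat \<Rightarrow> nat \<Rightarrow> real) \<Rightarrow> nat set \<Rightarrow> real" where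
  "center_cost X d C = Max ((\<lambda>x. dist_set d x C) ` X)"

definition opt_center :: "nat set \<Rightarrow> (nat \<Rightarrow> nat \<Rightarrow> real) \<Rightarrow> nat \<Rightarrow> real" where
  "opt_center X d k = Min {center_cost X d C | C. C \<subseteq> X \<and> card C = k}"

text \<open>A set C is an alpha-approximate k-center solution (no size constraint here).\<close>
definition good_centers :: "nat set \<Rightarrow> (nat \<Rightarrow> nat \<Rightarrow> real) \<Rightarrow> nat \<Rightarrow> real \<Rightarrow> nat set \<Rightarrow> bool" where
  "good_centers X d k \<alpha> C \<longleftrightarrow> C \<noteq> {} \<and> C \<subseteq> X \<and> center_cost X d C \<le> \<alpha> * opt_center X d k"

text \<open>Deterministic adaptive query strategies: given the history of answered queries,
either ask the distance of a pair (Inl) or stop and output a set of centers (Inr).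
A randomized algorithm is a distribution over such strategies (chosen from X, k, profile).\<close>

type_synonym history = "((nat \<times> nat) \<times> real) list"
type_synonym strategy = "history \<Rightarrow> (nat \<times> nat) + nat set"

fun hist :: "strategy \<Rightarrow> (nat \<Rightarrow> nat \<Rightarrow> real) \<Rightarrow> nat \<Rightarrow> history" where
  "hist S d 0 = []"
| "hist S d (Suc m) =
     (let h = hist S d m in
      case S h of Inl q \<Rightarrow> h @ [(q, d (fst q) (snd q))] | Inr _ \<Rightarrow> h)"

definition terminates :: "strategy \<Rightarrow> (nat \<Rightarrow> nat \<Rightarrow> real) \<Rightarrow> bool" where
  "terminates S d \<longleftrightarrow> (\<exists>m. \<not> isl (S (hist S d m)))"

definition run_output :: "strategy \<Rightarrow> (nat \<Rightarrow> nat \<Rightarrow> real) \<Rightarrow> nat set" where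
  "run_output S d = projr (S (hist S d (LEAST m. \<not> isl (S (hist S d m)))))"

text \<open>The run makes at least m distance queries (non-terminating runs make infinitely many).\<close>
definition queries_at_least :: "strategy \<Rightarrow> (nat \<Rightarrow> nat \<Rightarrow> real) \<Rightarrow> nat \<Rightarrow> bool" where
  "queries_at_least S d m \<longleftrightarrow> (\<forall>j<m. isl (S (hist S d j)))"

end

theory Submission
  imports Defs "HOL-Real_Asymp.Real_Asymp"
begin


lemma count_lemma:
  fixes M :: "'a pmf" and E :: "'i \<Rightarrow> 'a set" and N :: real
  assumes "finite I" and "\<And>x. x \<in> set_pmf M \<Longrightarrow> real (card {i\<in>I. x \<in> E i}) \<le> N"
  shows "(\<Sum>i\<in>I. measure_pmf.prob M (E i)) \<le> N"
proof -
  have "(\<Sum>i\<in>I. measure_pmf.prob M (E i)) = (\<Sum>i\<in>I. measure_pmf.expectation M (indicator (E i)))"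
    by simp
  also have "\<dots> = measure_pmf.expectation M (\<lambda>x. \<Sum>i\<in>I. indicator (E i) x)"
  proof -
    have int: "\<And>i. integrable (measure_pmf M) (indicator (E i) :: 'a \<Rightarrow> real)"
      by (auto intro!: measure_pmf.integrable_const_bound[where B=1])
    show ?thesis using Bochner_Integration.integral_sum[of I "measure_pmf M" "\<lambda>i. indicator (E i) :: 'a \<Rightarrow> real", OF int] by simp
  qed
  also have "\<dots> \<le> measure_pmf.expectation M (\<lambda>x. N)"
  proof (rule integral_mono_AE)
    show "AE x in measure_pmf M. (\<Sum>i\<in>I. indicator (E i) x) \<le> N"
    proof (rule AE_pmfI)
      fix x assume x: "x \<in> set_pmf M"
      have "(\<Sum>i\<in>I. indicator (E i) x :: real) = real (card {i\<in>I. x \<in> E i})"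
        using assms(1) by (simp add: indicator_def sum.If_cases Int_def conj_commute)
      then show "(\<Sum>i\<in>I. indicator (E i) x) \<le> N" using assms(2)[OF x] by simp
    qed
  next
    have "\<And>x. \<bar>\<Sum>i\<in>I. indicator (E i) x :: real\<bar> \<le> real (card I)"
    proof -
      fix x
      have "\<bar>\<Sum>i\<in>I. indicator (E i) x :: real\<bar> = (\<Sum>i\<in>I. indicator (E i) x)"
        by (intro abs_of_nonneg sum_nonneg) auto
      also have "\<dots> \<le> (\<Sum>i\<in>I. 1)" by (intro sum_mono) (auto simp: indicator_def)
      finally show "\<bar>\<Sum>i\<in>I. indicator (E i) x :: real\<bar> \<le> real (card I)" by simp
    qed
    then show "integrable (measure_pmf M) (\<lambda>x. \<Sum>i\<in>I. indicator (E i) x :: real)"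
      by (intro measure_pmf.integrable_const_bound[where B="real (card I)"]) auto
  qed auto
  also have "\<dots> = N" by simp
  finally show ?thesis .
qed



definition lev :: "nat \<Rightarrow> nat \<Rightarrow> nat" where
  "lev x y = (LEAST t. x div 2^t = y div 2^t)"

lemma blk_mono:
  assumes "x div 2^t = y div (2::nat)^t" "t \<le> u"
  shows "x div 2^u = y div (2::nat)^u"
proof -
  have "(2::nat)^u = 2^t * 2^(u-t)" using assms(2) by (simp flip: power_add)
  then show ?thesis using assms(1) by (simp add: div_mult2_eq)
qed

lemma lev_ex: "\<exists>t. x div 2^t = y div (2::nat)^t"
proof -
  have "x < 2^(x+y)" "y < 2^(x+y)"
    using less_exp[of "x+y"] by linarith+
  then show ?thesis by (intro exI[of _ "x+y"]) simp
qed

lemma lev_le_iff: "lev x y \<le> t \<longleftrightarrow> x div 2^t = y div (2::nat)^t"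
proof
  assume "lev x y \<le> t"
  moreover have "x div 2^lev x y = y div 2^lev x y"
    unfolding lev_def using lev_ex by (rule LeastI_ex)
  ultimately show "x div 2^t = y div 2^t" using blk_mono by blast
next
  assume "x div 2^t = y div (2::nat)^t"
  then show "lev x y \<le> t" unfolding lev_def by (rule Least_le)
qed

lemma lev_sym: "lev x y = lev y x"
proof -
  have "(\<lambda>t. x div 2^t = y div (2::nat)^t) = (\<lambda>t. y div 2^t = x div 2^t)" by auto
  then show ?thesis unfolding lev_def by simp
qed

lemma lev_0_iff: "lev x y = 0 \<longleftrightarrow> x = y"
  using lev_le_iff[of x y 0] by simp

lemma lev_xx[simp]: "lev x x = 0"
  by (simp add: lev_0_iff)

lemma lev_trans: "lev x z \<le> max (lev x y) (lev y z)"
proof -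
  let ?m = "max (lev x y) (lev y z)"
  have "x div 2^?m = y div 2^?m" by (subst lev_le_iff[symmetric]) simp
  moreover have "y div 2^?m = z div 2^?m" by (subst lev_le_iff[symmetric]) simp
  ultimately show ?thesis by (simp add: lev_le_iff)
qed

lemma lev_bound: "x < 2^L \<Longrightarrow> y < 2^L \<Longrightarrow> lev x y \<le> L"
  by (simp add: lev_le_iff)

definition dd :: "nat set \<Rightarrow> real \<Rightarrow> nat \<Rightarrow> nat \<Rightarrow> nat \<Rightarrow> real" where
  "dd X H s x y = (if x \<in> X \<and> y \<in> X then (if x = y then 0 else if lev x s \<le> lev x y then H else 1) else 0)"

definition prof :: "nat set \<Rightarrow> nat \<Rightarrow> nat list" where
  "prof X x = (if x \<in> X then sort_key (lev x) (sorted_list_of_set X) else [])"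

lemma dd_sym_aux: "lev x s \<le> lev x y \<Longrightarrow> lev y s \<le> lev x y"
proof -
  assume a: "lev x s \<le> lev x y"
  have "x div 2^lev x y = s div 2^lev x y" using a by (simp add: lev_le_iff)
  moreover have "x div 2^lev x y = y div 2^lev x y" by (subst lev_le_iff[symmetric]) simp
  ultimately show ?thesis by (simp add: lev_le_iff)
qed

lemma dd_sym: "dd X H s x y = dd X H s y x"
proof -
  have "lev x s \<le> lev x y \<longleftrightarrow> lev y s \<le> lev y x"
    using dd_sym_aux[of x s y] dd_sym_aux[of y s x] lev_sym[of x y] by auto
  then show ?thesis unfolding dd_def by auto
qed

lemma light_trans:
  assumes "\<not> lev x s \<le> lev x y" "\<not> lev y s \<le> lev y z"
  shows "\<not> lev x s \<le> lev x z"
  using assms lev_trans[of x z y] lev_trans[of y s x] lev_sym[of x y] by linarith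

lemma dd_nonneg: "H \<ge> 0 \<Longrightarrow> dd X H s x y \<ge> 0" by (simp add: dd_def)

lemma dd_0: "dd X H s x x = 0" by (simp add: dd_def)
lemma dd_H: "x \<in> X \<Longrightarrow> y \<in> X \<Longrightarrow> x \<noteq> y \<Longrightarrow> lev x s \<le> lev x y \<Longrightarrow> dd X H s x y = H"
  by (simp add: dd_def)
lemma dd_1: "x \<in> X \<Longrightarrow> y \<in> X \<Longrightarrow> x \<noteq> y \<Longrightarrow> \<not> lev x s \<le> lev x y \<Longrightarrow> dd X H s x y = 1"
  by (simp add: dd_def)
lemma dd_out: "x \<notin> X \<or> y \<notin> X \<Longrightarrow> dd X H s x y = 0"
  by (auto simp: dd_def)

lemma metric_dd:
  assumes "H \<ge> 2"
  shows "metric_on X (dd X H s)"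
  unfolding metric_on_def
proof (intro conjI ballI allI impI)
  fix x y assume xy: "x \<in> X" "y \<in> X"
  show "dd X H s x y = dd X H s y x" by (rule dd_sym)
  show "dd X H s x y = 0 \<longleftrightarrow> x = y"
  proof (cases "x = y")
    case True then show ?thesis by (simp add: dd_0)
  next
    case False then show ?thesis using assms xy dd_H[of x X y s H] dd_1[of x X y s H]
      by (cases "lev x s \<le> lev x y") auto
  qed
next
  fix x y z assume X: "x \<in> X" "y \<in> X" "z \<in> X"
  have nn: "\<And>a b. dd X H s a b \<ge> 0" using assms dd_nonneg[of H] by simp
  show "dd X H s x z \<le> dd X H s x y + dd X H s y z"
  proof (cases "x = y")
    case True then show ?thesis using nn[of y z] by (simp add: dd_0)
  next
    case xy: False
    show ?thesis
    proof (cases "y = z")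
      case True then show ?thesis using nn[of x y] by (simp add: dd_0)
    next
      case yz: False
      show ?thesis
      proof (cases "x = z")
        case True then show ?thesis using nn[of x y] nn[of y z] by (simp add: dd_0)
      next
        case xz: False
        show ?thesis
        proof (cases "lev x s \<le> lev x z")
          case False then show ?thesis
            using dd_1[OF X(1) X(3) xz False] dd_H[OF X(1) X(2) xy, of s H] dd_1[OF X(1) X(2) xy, of s H]
              dd_H[OF X(2) X(3) yz, of s H] dd_1[OF X(2) X(3) yz, of s H] assms
            by (cases "lev x s \<le> lev x y"; cases "lev y s \<le> lev y z") auto
        next
          case True
          then have "lev x s \<le> lev x y \<or> lev y s \<le> lev y z" using light_trans[of x s y z] by blast
          then show ?thesis
            using dd_H[OF X(1) X(3) xz True] dd_H[OF X(1) X(2) xy, of s H] dd_1[OF X(1) X(2) xy, of s H]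
              dd_H[OF X(2) X(3) yz, of s H] dd_1[OF X(2) X(3) yz, of s H] assms
            by (cases "lev x s \<le> lev x y"; cases "lev y s \<le> lev y z") auto
        qed
      qed
    qed
  qed
next
  fix a b assume "a \<notin> X \<or> b \<notin> X" then show "dd X H s a b = 0" by (rule dd_out)
qed

lemma dd_mono:
  assumes "H \<ge> 2" "x \<in> X" "y \<in> X" "z \<in> X" "lev x y \<le> lev x z"
  shows "dd X H s x y \<le> dd X H s x z"
proof (cases "x = y")
  case True then show ?thesis using dd_nonneg[of H X s x z] assms(1) by (simp add: dd_0)
next
  case xy: False
  then have "lev x y \<noteq> 0" using lev_0_iff[of x y] by simp
  then have xz: "x \<noteq> z" using assms(5) by auto
  show ?thesis
  proof (cases "lev x s \<le> lev x y")
    case True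
    then have "lev x s \<le> lev x z" using assms(5) by linarith
    then show ?thesis using dd_H[OF assms(2) assms(4) xz] dd_H[OF assms(2) assms(3) xy True] by simp
  next
    case False
    have "dd X H s x z \<ge> 1"
      using dd_H[OF assms(2) assms(4) xz, of s H] dd_1[OF assms(2) assms(4) xz, of s H] assms(1)
      by (cases "lev x s \<le> lev x z") auto
    then show ?thesis using dd_1[OF assms(2) assms(3) xy False] by simp
  qed
qed

lemma prof_ok:
  assumes "H \<ge> 2" "finite X"
  shows "consistent_profile X (dd X H s) (prof X)"
  unfolding consistent_profile_def
proof (intro allI conjI impI)
  fix x assume x: "x \<in> X"
  let ?l = "sort_key (lev x) (sorted_list_of_set X)"
  show "distinct (prof X x)" using x assms by (simp add: prof_def)
  show "set (prof X x) = X" using x assms by (simp add: prof_def)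
  fix i j assume ij: "i < j" "j < length (prof X x)"
  have s: "sorted (map (lev x) ?l)" by simp
  have "lev x (?l ! i) \<le> lev x (?l ! j)"
    using sorted_nth_mono[OF s, of i j] ij x by (simp add: prof_def)
  moreover have "?l ! i \<in> X" "?l ! j \<in> X"
  proof -
    have "set ?l = X" using assms by simp
    moreover have "i < length ?l" "j < length ?l" using ij x by (auto simp: prof_def)
    ultimately show "?l ! i \<in> X" "?l ! j \<in> X" by (metis nth_mem)+
  qed
  ultimately show "dd X H s x (prof X x ! i) \<le> dd X H s x (prof X x ! j)"
    using dd_mono[OF assms(1) x] x by (simp add: prof_def)
next
  fix x assume "x \<notin> X" then show "prof X x = []" by (simp add: prof_def)
qed



definition flip :: "nat \<Rightarrow> nat \<Rightarrow> nat" where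
  "flip s t = (let u = s div 2^t in (if even u then u+1 else u-1) * 2^t)"

lemma div2_three:
  assumes "a div 2 = c div 2" "b div 2 = c div 2" "a \<noteq> c" "b \<noteq> (c::nat)"
  shows "a = b"
proof -
  have ea: "a = 2*(a div 2) + a mod 2" and eb: "b = 2*(b div 2) + b mod 2"
    and ec: "c = 2*(c div 2) + c mod 2" by simp_all
  have m: "a mod 2 < 2" "b mod 2 < 2" "c mod 2 < 2" by simp_all
  have "a mod 2 \<noteq> c mod 2" using ea ec assms(1,3) by metis
  moreover have "b mod 2 \<noteq> c mod 2" using eb ec assms(2,4) by metis
  ultimately have "a mod 2 = b mod 2" using m by linarith
  then show ?thesis using ea eb assms(1,2) by linarith
qed

lemma div_suc_pow: "(x::nat) div 2^(Suc t) = x div 2^t div 2"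
  by (metis div_mult2_eq power_Suc2)

lemma flipu: "(if even (u::nat) then u + 1 else u - 1) \<noteq> u"
  "(if even (u::nat) then u + 1 else u - 1) div 2 = u div 2"
  by (cases "even u"; auto elim!: evenE oddE)+

lemma flip_div: "flip s t div 2^t = (if even (s div 2^t) then s div 2^t + 1 else s div 2^t - 1)"
  by (simp add: flip_def Let_def)

lemma flip_lev: "lev (flip s t) s = Suc t"
proof -
  let ?u = "s div 2^t"
  have a: "flip s t div 2^t \<noteq> ?u" unfolding flip_div by (rule flipu)
  have b: "flip s t div 2^t div 2 = ?u div 2" unfolding flip_div by (rule flipu)
  have "flip s t div 2^Suc t = s div 2^Suc t" using b by (simp only: div_suc_pow)
  then have "lev (flip s t) s \<le> Suc t" by (simp only: lev_le_iff)
  moreover have "\<not> lev (flip s t) s \<le> t" using a by (simp add: lev_le_iff)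
  ultimately show ?thesis by simp
qed

lemma flip_close:
  assumes "lev y s = Suc t"
  shows "lev y (flip s t) \<le> t"
proof -
  have "y div 2^Suc t = s div 2^Suc t"
    using assms lev_le_iff[of y s "Suc t"] by (simp del: power_Suc)
  then have "y div 2^t div 2 = s div 2^t div 2" by (simp only: div_suc_pow)
  moreover have "flip s t div 2^t div 2 = s div 2^t div 2"
  proof -
    have "flip s t div 2^Suc t = s div 2^Suc t"
      using flip_lev[of s t] lev_le_iff[of "flip s t" s "Suc t"] by (simp del: power_Suc)
    then show ?thesis by (simp only: div_suc_pow)
  qed
  moreover have "y div 2^t \<noteq> s div 2^t" using assms lev_le_iff[of y s t] by simp
  moreover have "flip s t div 2^t \<noteq> s div 2^t"
    using flip_lev[of s t] lev_le_iff[of "flip s t" s t] by simp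
  ultimately have "y div 2^t = flip s t div 2^t" by (rule div2_three)
  then show ?thesis by (simp add: lev_le_iff)
qed

lemma flip_mem:
  assumes "s < 2^L" "t < L"
  shows "flip s t < 2^L"
proof -
  have "lev (flip s t) s \<le> L" using flip_lev[of s t] assms by simp
  then have "flip s t div 2^L = s div 2^L" by (simp add: lev_le_iff)
  then show ?thesis using assms by (simp add: div_eq_0_iff)
qed

definition Cstar :: "nat \<Rightarrow> nat \<Rightarrow> nat set" where
  "Cstar L s = insert s (flip s ` {..<L})"

lemma Cstar_sub: "s < 2^L \<Longrightarrow> Cstar L s \<subseteq> {..<2^L}"
  unfolding Cstar_def
proof (intro insert_subsetI image_subsetI)
  fix t assume "s < 2^L" "t \<in> {..<L}"
  then show "flip s t \<in> {..<2^L}" using flip_mem[of s L t] by simp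
qed simp

lemma Cstar_card: "card (Cstar L s) = Suc L"
proof -
  have inj: "inj_on (flip s) {..<L}"
  proof (rule inj_onI)
    fix a b assume ab: "flip s a = flip s b"
    have "Suc a = lev (flip s a) s" by (rule flip_lev[symmetric])
    also have "\<dots> = lev (flip s b) s" by (simp only: ab)
    also have "\<dots> = Suc b" by (rule flip_lev)
    finally show "a = b" by simp
  qed
  have ns: "s \<notin> flip s ` {..<L}"
  proof
    assume "s \<in> flip s ` {..<L}"
    then obtain t where "s = flip s t" by blast
    then have "lev s s = Suc t" using flip_lev[of s t] by simp
    then show False by simp
  qed
  have "card (Cstar L s) = Suc (card (flip s ` {..<L}))"
    unfolding Cstar_def using ns by (intro card_insert_disjoint) auto
  also have "card (flip s ` {..<L}) = L" using card_image[OF inj] by simp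
  finally show ?thesis .
qed

lemma cost_Cstar:
  assumes "s < 2^L" "H \<ge> 2"
  shows "center_cost {..<2^L} (dd {..<2^L} H s) (Cstar L s) \<le> 1"
proof -
  let ?X = "{..<(2::nat)^L}"
  have fin: "finite (Cstar L s)" by (simp add: Cstar_def)
  have "dist_set (dd ?X H s) y (Cstar L s) \<le> 1" if y: "y \<in> ?X" for y
  proof -
    have "\<exists>c\<in>Cstar L s. dd ?X H s y c \<le> 1"
    proof (cases "y = s")
      case True
      have "s \<in> Cstar L s" by (simp add: Cstar_def)
      then show ?thesis using True dd_0[of ?X H s s] by force
    next
      case False
      then have "lev y s \<ge> 1" using lev_0_iff[of y s] by simp
      moreover have "lev y s \<le> L" using lev_bound y assms by simp
      define t where "t = lev y s - 1"
      have t: "lev y s = Suc t" "t < L" using \<open>lev y s \<ge> 1\<close> \<open>lev y s \<le> L\<close> unfolding t_def by auto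
      have c: "flip s t \<in> Cstar L s" using t by (auto simp: Cstar_def)
      have "lev y (flip s t) < lev y s" using flip_close[OF t(1)] t by simp
      moreover have fm: "flip s t \<in> ?X" using flip_mem[OF assms(1) t(2)] by simp
      ultimately have "dd ?X H s y (flip s t) \<le> 1"
        using dd_1[OF y fm, of s H] dd_0[of ?X H s y] by (cases "y = flip s t") auto
      then show ?thesis using c by blast
    qed
    then obtain c where c: "c \<in> Cstar L s" "dd ?X H s y c \<le> 1" by blast
    have "dist_set (dd ?X H s) y (Cstar L s) \<le> dd ?X H s y c"
      unfolding dist_set_def using fin c(1) by (intro Min_le) auto
    then show ?thesis using c(2) by linarith
  qed
  moreover have "?X \<noteq> {}" proof
    assume "?X = {}"
    moreover have "(0::nat) \<in> ?X" by simp
    ultimately show False by blast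
  qed
  ultimately show ?thesis unfolding center_cost_def by (subst Max_le_iff) auto
qed

lemma opt_le1:
  assumes "s < 2^L" "H \<ge> 2"
  shows "opt_center {..<2^L} (dd {..<2^L} H s) (Suc L) \<le> 1"
proof -
  let ?X = "{..<(2::nat)^L}" let ?d = "dd ?X H s"
  have fin: "finite {center_cost ?X ?d C | C. C \<subseteq> ?X \<and> card C = Suc L}"
  proof -
    have "{center_cost ?X ?d C | C. C \<subseteq> ?X \<and> card C = Suc L} \<subseteq> (center_cost ?X ?d) ` Pow ?X" by auto
    then show ?thesis by (rule finite_subset) auto
  qed
  have "center_cost ?X ?d (Cstar L s) \<in> {center_cost ?X ?d C | C. C \<subseteq> ?X \<and> card C = Suc L}"
    using Cstar_sub[OF assms(1)] Cstar_card by blast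
  then have "opt_center ?X ?d (Suc L) \<le> center_cost ?X ?d (Cstar L s)"
    unfolding opt_center_def using fin by (intro Min_le) auto
  then show ?thesis using cost_Cstar[OF assms] by linarith
qed

lemma good_mem:
  assumes "s < 2^L" "H \<ge> 2" "\<alpha> \<ge> 0" "H > \<alpha>"
    and g: "good_centers {..<2^L} (dd {..<2^L} H s) (Suc L) \<alpha> C"
  shows "s \<in> C"
proof (rule ccontr)
  assume ns: "s \<notin> C"
  let ?X = "{..<(2::nat)^L}" let ?d = "dd ?X H s"
  have C: "C \<noteq> {}" "C \<subseteq> ?X" "center_cost ?X ?d C \<le> \<alpha> * opt_center ?X ?d (Suc L)"
    using g by (auto simp: good_centers_def)
  have fin: "finite C" using C(2) finite_subset by blast
  have "?d s ` C = {H}"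
  proof -
    have "\<And>c. c \<in> C \<Longrightarrow> ?d s c = H"
    proof -
      fix c assume c: "c \<in> C"
      then have "c \<noteq> s" "c \<in> ?X" using ns C(2) by auto
      moreover have "s \<in> ?X" using assms(1) by simp
      ultimately show "?d s c = H" using dd_H[of s ?X c s H] by simp
    qed
    then show ?thesis using C(1) by auto
  qed
  then have "dist_set ?d s C = H" by (simp add: dist_set_def)
  moreover have "dist_set ?d s C \<le> center_cost ?X ?d C"
    unfolding center_cost_def using assms(1) by (intro Max_ge) auto
  moreover have "\<alpha> * opt_center ?X ?d (Suc L) \<le> \<alpha>"
    using opt_le1[OF assms(1,2)] assms(3) by (simp add: mult_left_le)
  ultimately show False using C(3) assms(4) by linarith
qed



lemma hist_stop:
  assumes "\<not> isl (S (hist S d j))" "j \<le> m"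
  shows "hist S d m = hist S d j"
  using assms(2)
proof (induction m rule: dec_induct)
  case base then show ?case by simp
next
  case (step m)
  have "S (hist S d m) = S (hist S d j)" using step.IH by simp
  then obtain rr where "S (hist S d m) = Inr rr" using assms(1) by (cases "S (hist S d j)") auto
  then show ?case using step.IH by (simp add: Let_def)
qed

lemma run_output_eq:
  assumes "\<not> queries_at_least S d q"
  shows "terminates S d \<and> run_output S d = projr (S (hist S d q))"
proof -
  obtain j where j: "j < q" "\<not> isl (S (hist S d j))"
    using assms unfolding queries_at_least_def by blast
  define m0 where "m0 = (LEAST m. \<not> isl (S (hist S d m)))"
  have m0: "\<not> isl (S (hist S d m0))" unfolding m0_def using j(2) by (rule LeastI)
  have "m0 \<le> j" unfolding m0_def using j(2) by (rule Least_le)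
  then have "hist S d q = hist S d m0" using hist_stop[of S d m0 q] m0 j(1) by simp
  then show ?thesis using j(2) unfolding terminates_def run_output_def m0_def[symmetric] by auto
qed

definition G :: "strategy \<Rightarrow> nat set \<Rightarrow> real \<Rightarrow> history \<Rightarrow> bool \<Rightarrow> history" where
  "G S X H h \<beta> = (case S h of Inl q \<Rightarrow> h @ [(q, if fst q \<in> X \<and> snd q \<in> X then
      (if fst q = snd q then 0 else if \<beta> then H else 1) else 0)] | Inr _ \<Rightarrow> h)"

lemma hist_step: "\<exists>\<beta>. hist S (dd X H s) (Suc m) = G S X H (hist S (dd X H s) m) \<beta>"
proof (cases "S (hist S (dd X H s) m)")
  case (Inl q)
  show ?thesis
    by (rule exI[of _ "lev (fst q) s \<le> lev (fst q) (snd q)"]) (simp add: Inl G_def dd_def Let_def)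
next
  case (Inr rr)
  then show ?thesis by (simp add: G_def Let_def)
qed

lemma hist_count:
  assumes "finite X"
  shows "card ((\<lambda>s. hist S (dd X H s) m) ` X) \<le> 2 ^ m"
proof (induction m)
  case 0
  have "(\<lambda>s. hist S (dd X H s) 0) ` X \<subseteq> {[]}" by auto
  then have "card ((\<lambda>s. hist S (dd X H s) 0) ` X) \<le> card {[] :: history}"
    by (intro card_mono) auto
  then show ?case by simp
next
  case (Suc m)
  let ?Hm = "(\<lambda>s. hist S (dd X H s) m) ` X"
  have sub: "(\<lambda>s. hist S (dd X H s) (Suc m)) ` X \<subseteq> (\<lambda>(h, \<beta>). G S X H h \<beta>) ` (?Hm \<times> UNIV)"
  proof
    fix h assume "h \<in> (\<lambda>s. hist S (dd X H s) (Suc m)) ` X"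
    then obtain s where s: "s \<in> X" "h = hist S (dd X H s) (Suc m)" by blast
    obtain \<beta> where "h = G S X H (hist S (dd X H s) m) \<beta>" using hist_step s(2) by blast
    then show "h \<in> (\<lambda>(h, \<beta>). G S X H h \<beta>) ` (?Hm \<times> UNIV)" using s(1) by force
  qed
  have fin: "finite (?Hm \<times> (UNIV :: bool set))" using assms by simp
  have "card ((\<lambda>s. hist S (dd X H s) (Suc m)) ` X) \<le> card ((\<lambda>(h, \<beta>). G S X H h \<beta>) ` (?Hm \<times> UNIV))"
    using sub fin by (intro card_mono) auto
  also have "\<dots> \<le> card (?Hm \<times> (UNIV :: bool set))" using fin by (rule card_image_le)
  also have "\<dots> = card ?Hm * 2" by (simp add: card_cartesian_product)
  also have "\<dots> \<le> 2 ^ Suc m" using Suc.IH by simp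
  finally show ?case .
qed

lemma succ_count:
  assumes "finite X"
  shows "card {s\<in>X. \<not> queries_at_least S (dd X H s) q \<and> s \<in> run_output S (dd X H s)
            \<and> run_output S (dd X H s) \<subseteq> X \<and> card (run_output S (dd X H s)) \<le> k} \<le> 2^q * k"
proof -
  let ?Hq = "(\<lambda>s. hist S (dd X H s) q) ` X"
  let ?A = "\<lambda>h. {s\<in>X. s \<in> projr (S h) \<and> projr (S h) \<subseteq> X \<and> card (projr (S h)) \<le> k}"
  have sub: "{s\<in>X. \<not> queries_at_least S (dd X H s) q \<and> s \<in> run_output S (dd X H s)
            \<and> run_output S (dd X H s) \<subseteq> X \<and> card (run_output S (dd X H s)) \<le> k} \<subseteq> (\<Union>h\<in>?Hq. ?A h)"
  proof
    fix s assume s: "s \<in> {s\<in>X. \<not> queries_at_least S (dd X H s) q \<and> s \<in> run_output S (dd X H s)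
            \<and> run_output S (dd X H s) \<subseteq> X \<and> card (run_output S (dd X H s)) \<le> k}"
    then have "run_output S (dd X H s) = projr (S (hist S (dd X H s) q))"
      using run_output_eq by blast
    then show "s \<in> (\<Union>h\<in>?Hq. ?A h)" using s by auto
  qed
  have Ak: "card (?A h) \<le> k" for h
  proof (cases "projr (S h) \<subseteq> X \<and> card (projr (S h)) \<le> k")
    case True
    then have "?A h \<subseteq> projr (S h)" by auto
    moreover have "finite (projr (S h))" using True assms finite_subset by blast
    ultimately show ?thesis using True card_mono order_trans by blast
  next
    case False
    have "?A h = {}" using False by blast
    then show ?thesis by (simp only: card.empty)
  qed
  have finA: "finite (\<Union>h\<in>?Hq. ?A h)" using assms by auto
  have "card {s\<in>X. \<not> queries_at_least S (dd X H s) q \<and> s \<in> run_output S (dd X H s)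
            \<and> run_output S (dd X H s) \<subseteq> X \<and> card (run_output S (dd X H s)) \<le> k}
        \<le> card (\<Union>h\<in>?Hq. ?A h)" using sub finA by (rule card_mono[rotated])
  also have "\<dots> \<le> (\<Sum>h\<in>?Hq. card (?A h))" using assms by (intro card_UN_le) auto
  also have "\<dots> \<le> (\<Sum>h\<in>?Hq. k)" using Ak by (intro sum_mono) auto
  also have "\<dots> = card ?Hq * k" by simp
  also have "\<dots> \<le> 2^q * k" using hist_count[OF assms, of S H q] by simp
  finally show ?thesis .
qed



lemma asym:
  assumes "p > (0::real)"
  shows "\<exists>k0::nat. \<forall>k\<ge>k0. real k * 2 powr (real k / 4 + 1) < p * (2 powr real k / 2)"
proof -
  have "(\<lambda>k::nat. real k * 2 powr (real k / 4 + 1) / (2 powr real k / 2)) \<longlonglongrightarrow> 0"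
    by real_asymp
  then have "eventually (\<lambda>k::nat. real k * 2 powr (real k / 4 + 1) / (2 powr real k / 2) < p) sequentially"
    using assms by (rule order_tendstoD)
  then obtain k0 where k0: "\<forall>k\<ge>k0. real k * 2 powr (real k / 4 + 1) / (2 powr real k / 2) < p"
    unfolding eventually_sequentially by blast
  show ?thesis
  proof (intro exI allI impI)
    fix k assume "k \<ge> k0"
    then have "real k * 2 powr (real k / 4 + 1) / (2 powr real k / 2) < p" using k0 by blast
    moreover have "2 powr real k / 2 > 0" by simp
    ultimately show "real k * 2 powr (real k / 4 + 1) < p * (2 powr real k / 2)"
      by (simp add: divide_less_eq)
  qed
qed

lemma pow_bound:
  assumes "k \<ge> 1"
  shows "real (2 ^ nat \<lceil>1/4 * real k\<rceil>) \<le> 2 powr (real k / 4 + 1)"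
    and "real (2 ^ (k - 1)) = 2 powr real k / 2"
proof -
  have "real (nat \<lceil>1/4 * real k\<rceil>) \<le> real k / 4 + 1"
    by (simp add: of_nat_nat)
  then have "2 powr real (nat \<lceil>1/4 * real k\<rceil>) \<le> 2 powr (real k / 4 + 1)"
    by (intro powr_mono) auto
  moreover have "2 powr real (nat \<lceil>1/4 * real k\<rceil>) = real (2 ^ nat \<lceil>1/4 * real k\<rceil>)"
    by (subst powr_realpow) auto
  ultimately show "real (2 ^ nat \<lceil>1/4 * real k\<rceil>) \<le> 2 powr (real k / 4 + 1)"
    by linarith
  have "2 powr real k = 2 powr (real (k - 1) + 1)" using assms by (simp add: of_nat_diff)
  also have "\<dots> = 2 ^ (k - 1) * 2" by (simp add: powr_add powr_realpow)
  finally show "real (2 ^ (k - 1)) = 2 powr real k / 2" by simp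
qed

lemma suc_le_pow: "Suc L \<le> 2 ^ L"
  by (induction L) auto



lemma inst_ok:
  assumes "H \<ge> 2" "k = Suc L"
  shows "kc_instance {..<2^L} (dd {..<2^L} H s) k" "consistent_profile {..<2^L} (dd {..<2^L} H s) (prof {..<2^L})"
  using metric_dd[OF assms(1)] prof_ok[OF assms(1)] suc_le_pow[of L] assms(2)
  by (auto simp: kc_instance_def)

lemma prob_split:
  fixes M :: "'a pmf"
  assumes "\<And>x. x \<in> set_pmf M \<Longrightarrow> x \<in> Gs \<Longrightarrow> x \<in> E \<or> x \<in> B"
  shows "measure_pmf.prob M Gs \<le> measure_pmf.prob M E + measure_pmf.prob M B"
proof -
  have "measure_pmf.prob M Gs = measure_pmf.prob M (Gs \<inter> set_pmf M)" by (simp add: measure_Int_set_pmf)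
  also have "\<dots> \<le> measure_pmf.prob M (E \<union> B)"
    using assms by (intro measure_pmf.finite_measure_mono) auto
  also have "\<dots> \<le> measure_pmf.prob M E + measure_pmf.prob M B"
    by (rule measure_Un_le) auto
  finally show ?thesis .
qed

lemma part1:
  fixes \<alpha> p :: real
  assumes "\<alpha> \<ge> 1" and "0 < p"
  shows "\<exists>c>0. \<exists>k0. \<forall>A :: nat set \<Rightarrow> nat \<Rightarrow> (nat \<Rightarrow> nat list) \<Rightarrow> nat set pmf.
       (\<forall>X d k \<pi>. kc_instance X d k \<longrightarrow> consistent_profile X d \<pi> \<longrightarrow>
           set_pmf (A X k \<pi>) \<subseteq> Pow X \<and>
           measure_pmf.prob (A X k \<pi>) {C. good_centers X d k \<alpha> C} \<ge> p)
       \<longrightarrow> (\<forall>k\<ge>k0. \<exists>X d \<pi>. kc_instance X d k \<and> consistent_profile X d \<pi> \<and>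
              measure_pmf.prob (A X k \<pi>) {C. real (card C) \<ge> c * 2 ^ k} > 0)"
proof (intro exI[of _ "p/4"] conjI exI[of _ "1::nat"] allI impI)
  show "p/4 > 0" using assms by simp
  fix A :: "nat set \<Rightarrow> nat \<Rightarrow> (nat \<Rightarrow> nat list) \<Rightarrow> nat set pmf" and k :: nat
  assume hyp: "\<forall>X d k \<pi>. kc_instance X d k \<longrightarrow> consistent_profile X d \<pi> \<longrightarrow>
           set_pmf (A X k \<pi>) \<subseteq> Pow X \<and>
           measure_pmf.prob (A X k \<pi>) {C. good_centers X d k \<alpha> C} \<ge> p"
  assume k1: "1 \<le> k"
  define L where "L = k - 1"
  have kS: "k = Suc L" using k1 unfolding L_def by simp
  define X where "X = {..<(2::nat)^L}"
  define H where "H = 2 * \<alpha>"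
  define M where "M = A X k (prof X)"
  have H2: "H \<ge> 2" and Ha: "H > \<alpha>" and a0: "\<alpha> \<ge> 0" using assms unfolding H_def by auto
  note inst = inst_ok[OF H2 kS, folded X_def]
  let ?big = "{C. real (card C) \<ge> p/4 * 2 ^ k}"
  show "\<exists>X d \<pi>. kc_instance X d k \<and> consistent_profile X d \<pi> \<and> measure_pmf.prob (A X k \<pi>) ?big > 0"
  proof (rule ccontr)
    assume "\<not> ?thesis"
    then have "\<not> measure_pmf.prob M ?big > 0" using inst[of 0] unfolding M_def by blast
    then have big0: "measure_pmf.prob M ?big = 0" using measure_nonneg[of M ?big] by linarith
    define E where "E s = {C. C \<in> set_pmf M \<and> s \<in> C \<and> real (card C) < p/4 * 2 ^ k}" for s
    have supp: "set_pmf M \<subseteq> Pow X" using hyp inst[of 0] unfolding M_def by blast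
    have ps: "p \<le> measure_pmf.prob M (E s)" if s: "s \<in> X" for s
    proof -
      have "p \<le> measure_pmf.prob M {C. good_centers X (dd X H s) k \<alpha> C}"
        using hyp inst[of s] unfolding M_def by blast
      also have "\<dots> \<le> measure_pmf.prob M (E s) + measure_pmf.prob M ?big"
      proof (rule prob_split)
        fix C assume C: "C \<in> set_pmf M" "C \<in> {C. good_centers X (dd X H s) k \<alpha> C}"
        have "s \<in> C" using good_mem[OF _ H2 a0 Ha, of s L C] C(2) s kS unfolding X_def by simp
        then show "C \<in> E s \<or> C \<in> ?big" using C(1) unfolding E_def by auto
      qed
      finally show ?thesis using big0 by simp
    qed
    have "(\<Sum>s\<in>X. p) \<le> (\<Sum>s\<in>X. measure_pmf.prob M (E s))" using ps by (rule sum_mono)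
    also have "\<dots> \<le> p/4 * 2 ^ k"
    proof (rule count_lemma)
      show "finite X" unfolding X_def by simp
      fix C assume C: "C \<in> set_pmf M"
      show "real (card {s\<in>X. C \<in> E s}) \<le> p/4 * 2 ^ k"
      proof (cases "real (card C) < p/4 * 2 ^ k")
        case True
        have "finite C" using C supp unfolding X_def by (auto intro: finite_subset)
        then have "card {s\<in>X. C \<in> E s} \<le> card C" by (intro card_mono) (auto simp: E_def)
        then show ?thesis using True by linarith
      next
        case False
        then have "{s\<in>X. C \<in> E s} = {}" unfolding E_def by auto
        then have "real (card {s\<in>X. C \<in> E s}) = 0" by (simp only: card.empty of_nat_0)
        moreover have "p/4 * 2^k \<ge> 0" using assms by simp
        ultimately show ?thesis by linarith
      qed
    qed
    finally have "real (2^L) * p \<le> p/4 * 2 ^ k" unfolding X_def by simp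
    then have "real (2^L) * p \<le> p/2 * 2^L" using kS by simp
    moreover have "real (2^L) * p > 0" using assms by simp
    ultimately show False using assms(2) by simp
  qed
qed

lemma part2:
  fixes \<alpha> p :: real
  assumes "\<alpha> \<ge> 1" and "0 < p"
  shows "\<exists>c>0. \<exists>k0. \<forall>A :: nat set \<Rightarrow> nat \<Rightarrow> (nat \<Rightarrow> nat list) \<Rightarrow> strategy pmf.
       (\<forall>X d k \<pi>. kc_instance X d k \<longrightarrow> consistent_profile X d \<pi> \<longrightarrow>
           (\<forall>S\<in>set_pmf (A X k \<pi>). terminates S d \<longrightarrow>
               run_output S d \<subseteq> X \<and> card (run_output S d) \<le> k) \<and>
           measure_pmf.prob (A X k \<pi>)
             {S. terminates S d \<and> good_centers X d k \<alpha> (run_output S d)} \<ge> p)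
       \<longrightarrow> (\<forall>k\<ge>k0. \<exists>X d \<pi>. kc_instance X d k \<and> consistent_profile X d \<pi> \<and>
              measure_pmf.prob (A X k \<pi>)
                {S. queries_at_least S d (nat \<lceil>c * real k\<rceil>)} > 0)"
proof -
  obtain k0 :: nat where k0: "\<forall>k\<ge>k0. real k * 2 powr (real k / 4 + 1) < p * (2 powr real k / 2)"
    using asym[OF assms(2)] by blast
  show ?thesis
  proof (intro exI[of _ "1/4::real"] conjI exI[of _ "max 1 k0"] allI impI)
    show "(1/4::real) > 0" by simp
    fix A :: "nat set \<Rightarrow> nat \<Rightarrow> (nat \<Rightarrow> nat list) \<Rightarrow> strategy pmf" and k :: nat
    assume hyp: "\<forall>X d k \<pi>. kc_instance X d k \<longrightarrow> consistent_profile X d \<pi> \<longrightarrow>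
           (\<forall>S\<in>set_pmf (A X k \<pi>). terminates S d \<longrightarrow>
               run_output S d \<subseteq> X \<and> card (run_output S d) \<le> k) \<and>
           measure_pmf.prob (A X k \<pi>)
             {S. terminates S d \<and> good_centers X d k \<alpha> (run_output S d)} \<ge> p"
    assume kk: "max 1 k0 \<le> k"
    then have k1: "1 \<le> k" and kk0: "k0 \<le> k" by auto
    define q where "q = nat \<lceil>1/4 * real k\<rceil>"
    define L where "L = k - 1"
    have kS: "k = Suc L" using k1 unfolding L_def by simp
    define X where "X = {..<(2::nat)^L}"
    define H where "H = 2 * \<alpha>"
    define M where "M = A X k (prof X)"
    have H2: "H \<ge> 2" and Ha: "H > \<alpha>" and a0: "\<alpha> \<ge> 0" using assms unfolding H_def by auto
    note inst = inst_ok[OF H2 kS, folded X_def]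
    have finX: "finite X" unfolding X_def by simp
    have ineq: "real (2^q * k) < p * real (2^L)"
    proof -
      have "real (2^q * k) = real (2^q) * real k" by simp
      also have "\<dots> \<le> 2 powr (real k / 4 + 1) * real k"
        using pow_bound(1)[OF k1] unfolding q_def by (intro mult_right_mono) auto
      also have "\<dots> < p * (2 powr real k / 2)" using k0 kk0 by (simp add: mult.commute)
      also have "\<dots> = p * real (2^L)" using pow_bound(2)[OF k1] unfolding L_def by simp
      finally show ?thesis .
    qed
    let ?Q = "\<lambda>s. {S. queries_at_least S (dd X H s) q}"
    show "\<exists>X d \<pi>. kc_instance X d k \<and> consistent_profile X d \<pi> \<and>
              measure_pmf.prob (A X k \<pi>) {S. queries_at_least S d (nat \<lceil>1/4 * real k\<rceil>)} > 0"
    proof (rule ccontr)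
      assume "\<not> ?thesis"
      then have "\<not> measure_pmf.prob M (?Q s) > 0" for s
        using inst[of s] unfolding M_def q_def by blast
      then have Q0: "measure_pmf.prob M (?Q s) = 0" for s
        using measure_nonneg[of M "?Q s"] by (meson not_less order_antisym)
      define E where "E s = {S. S \<in> set_pmf M \<and> \<not> queries_at_least S (dd X H s) q
         \<and> terminates S (dd X H s) \<and> good_centers X (dd X H s) k \<alpha> (run_output S (dd X H s))}" for s
      have ps: "p \<le> measure_pmf.prob M (E s)" for s
      proof -
        have "p \<le> measure_pmf.prob M {S. terminates S (dd X H s) \<and> good_centers X (dd X H s) k \<alpha> (run_output S (dd X H s))}"
          using hyp inst[of s] unfolding M_def by blast
        also have "\<dots> \<le> measure_pmf.prob M (E s) + measure_pmf.prob M (?Q s)"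
          by (rule prob_split) (auto simp: E_def)
        finally show ?thesis using Q0[of s] by simp
      qed
      have "(\<Sum>s\<in>X. p) \<le> (\<Sum>s\<in>X. measure_pmf.prob M (E s))" using ps by (rule sum_mono)
      also have "\<dots> \<le> real (2^q * k)"
      proof (rule count_lemma[OF finX])
        fix S assume S: "S \<in> set_pmf M"
        have "{s\<in>X. S \<in> E s} \<subseteq> {s\<in>X. \<not> queries_at_least S (dd X H s) q \<and> s \<in> run_output S (dd X H s)
            \<and> run_output S (dd X H s) \<subseteq> X \<and> card (run_output S (dd X H s)) \<le> k}"
        proof
          fix s assume s: "s \<in> {s\<in>X. S \<in> E s}"
          then have sX: "s \<in> X" and ES: "S \<in> E s" by auto
          have "run_output S (dd X H s) \<subseteq> X \<and> card (run_output S (dd X H s)) \<le> k"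
            using hyp inst[of s] S ES unfolding M_def E_def by blast
          moreover have "s \<in> run_output S (dd X H s)"
            using good_mem[OF _ H2 a0 Ha, of s L "run_output S (dd X H s)"] ES sX kS
            unfolding E_def X_def by simp
          ultimately show "s \<in> {s\<in>X. \<not> queries_at_least S (dd X H s) q \<and> s \<in> run_output S (dd X H s)
            \<and> run_output S (dd X H s) \<subseteq> X \<and> card (run_output S (dd X H s)) \<le> k}"
            using sX ES unfolding E_def by blast
        qed
        then have "card {s\<in>X. S \<in> E s} \<le> card {s\<in>X. \<not> queries_at_least S (dd X H s) q \<and> s \<in> run_output S (dd X H s)
            \<and> run_output S (dd X H s) \<subseteq> X \<and> card (run_output S (dd X H s)) \<le> k}"
          using finX by (intro card_mono) auto
        also have "\<dots> \<le> 2^q * k" by (rule succ_count[OF finX])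
        finally show "real (card {s\<in>X. S \<in> E s}) \<le> real (2^q * k)" by linarith
      qed
      finally have "real (2^L) * p \<le> real (2^q * k)" unfolding X_def by simp
      then show False using ineq by (simp add: mult.commute)
    qed
  qed
qed


theorem mainTheorem10:
  fixes \<alpha> p :: real
  assumes "\<alpha> \<ge> 1" and "0 < p" and "p \<le> 1"
  shows
   "(\<exists>c>0. \<exists>k0. \<forall>A :: nat set \<Rightarrow> nat \<Rightarrow> (nat \<Rightarrow> nat list) \<Rightarrow> nat set pmf.
       (\<forall>X d k \<pi>. kc_instance X d k \<longrightarrow> consistent_profile X d \<pi> \<longrightarrow>
           set_pmf (A X k \<pi>) \<subseteq> Pow X \<and>
           measure_pmf.prob (A X k \<pi>) {C. good_centers X d k \<alpha> C} \<ge> p)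
       \<longrightarrow> (\<forall>k\<ge>k0. \<exists>X d \<pi>. kc_instance X d k \<and> consistent_profile X d \<pi> \<and>
              measure_pmf.prob (A X k \<pi>) {C. real (card C) \<ge> c * 2 ^ k} > 0))
  \<and>
   (\<exists>c>0. \<exists>k0. \<forall>A :: nat set \<Rightarrow> nat \<Rightarrow> (nat \<Rightarrow> nat list) \<Rightarrow> strategy pmf.
       (\<forall>X d k \<pi>. kc_instance X d k \<longrightarrow> consistent_profile X d \<pi> \<longrightarrow>
           (\<forall>S\<in>set_pmf (A X k \<pi>). terminates S d \<longrightarrow>
               run_output S d \<subseteq> X \<and> card (run_output S d) \<le> k) \<and>
           measure_pmf.prob (A X k \<pi>)
             {S. terminates S d \<and> good_centers X d k \<alpha> (run_output S d)} \<ge> p)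
       \<longrightarrow> (\<forall>k\<ge>k0. \<exists>X d \<pi>. kc_instance X d k \<and> consistent_profile X d \<pi> \<and>
              measure_pmf.prob (A X k \<pi>)
                {S. queries_at_least S d (nat \<lceil>c * real k\<rceil>)} > 0))"
  using part1[OF assms(1,2)] part2[OF assms(1,2)] by blast

end
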